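(* For $D,F\in\mathbb{R}$ let $S_{D,F}$ denote the system $\dot x=-y+xy$, $\dot y=x+Dx^2+Fy^2$. Let $D\in(-1,0)$. Then the period function of the center $(-1/D,0)$ of $S_{D,F}$ behaves as the period function of the center at the origin of $S_{-D-1,F}$: precisely, the change of variables $u=(Dx+1)/(D+1)$, $v=\sqrt{-D/(D+1)}\,y$ maps the periodic orbits around $(-1/D,0)$ of $S_{D,F}$ onto the periodic orbits around the origin of $S_{-D-1,F}$, and the minimal period of each such orbit of $S_{D,F}$ equals $\sqrt{-D/(D+1)}$ times the minimal period of the corresponding orbit of $S_{-D-1,F}$.
   Context: The period function of a center assigns to each periodic orbit in its period annulus (the largest punctured neighborhood of the center foliated by periodic orbits) its minimal period. *)

theory Defs
  imports "HOL-Analysis.Analysis"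
begin

definition sysDF :: "real \<Rightarrow> real \<Rightarrow> real \<times> real \<Rightarrow> real \<times> real" where
  "sysDF D F = (\<lambda>(x, y). (- y + x * y, x + D * x\<^sup>2 + F * y\<^sup>2))"

definition is_solution :: "(real \<times> real \<Rightarrow> real \<times> real) \<Rightarrow> (real \<Rightarrow> real \<times> real) \<Rightarrow> bool" where
  "is_solution f \<phi> \<longleftrightarrow> (\<forall>t. (\<phi> has_vector_derivative f (\<phi> t)) (at t))"

definition is_period :: "(real \<Rightarrow> 'a) \<Rightarrow> real \<Rightarrow> bool" where
  "is_period \<phi> T \<longleftrightarrow> T > 0 \<and> (\<forall>t. \<phi> (t + T) = \<phi> t)"

definition periodic_solution :: "(real \<times> real \<Rightarrow> real \<times> real) \<Rightarrow> (real \<Rightarrow> real \<times> real) \<Rightarrow> bool" where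
  "periodic_solution f \<phi> \<longleftrightarrow> is_solution f \<phi> \<and> (\<exists>T. is_period \<phi> T) \<and> \<not> (\<exists>c. \<forall>t. \<phi> t = c)"

definition min_period :: "(real \<Rightarrow> 'a) \<Rightarrow> real" where
  "min_period \<phi> = Inf {T. is_period \<phi> T}"

definition periodic_orbit :: "(real \<times> real \<Rightarrow> real \<times> real) \<Rightarrow> (real \<times> real) set \<Rightarrow> bool" where
  "periodic_orbit f \<Gamma> \<longleftrightarrow> (\<exists>\<phi>. periodic_solution f \<phi> \<and> \<Gamma> = range \<phi>)"

text \<open>Minimal period of a periodic orbit (independent of the chosen parametrisation).\<close>
definition orbit_period :: "(real \<times> real \<Rightarrow> real \<times> real) \<Rightarrow> (real \<times> real) set \<Rightarrow> real" where
  "orbit_period f \<Gamma> = (THE T. \<exists>\<phi>. periodic_solution f \<phi> \<and> range \<phi> = \<Gamma> \<and> min_period \<phi> = T)"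

text \<open>Period annulus of the center p: the largest punctured (connected, open) neighbourhood
  of p foliated by periodic orbits, i.e. the union of all connected open U containing p such that
  U - {p} is a union of periodic orbits, with p removed.\<close>
definition period_annulus :: "(real \<times> real \<Rightarrow> real \<times> real) \<Rightarrow> real \<times> real \<Rightarrow> (real \<times> real) set" where
  "period_annulus f p =
     \<Union>{U. open U \<and> connected U \<and> p \<in> U \<and>
          (\<forall>q \<in> U - {p}. \<exists>\<Gamma>. periodic_orbit f \<Gamma> \<and> q \<in> \<Gamma> \<and> \<Gamma> \<subseteq> U - {p})} - {p}"

definition annulus_orbits :: "(real \<times> real \<Rightarrow> real \<times> real) \<Rightarrow> real \<times> real \<Rightarrow> (real \<times> real) set set" where
  "annulus_orbits f p = {\<Gamma>. periodic_orbit f \<Gamma> \<and> \<Gamma> \<subseteq> period_annulus f p}"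

end

theory Submission imports Defs begin

lemma hvd_fst:
  assumes "(\<psi> has_vector_derivative v) (at t)"
  shows "((\<lambda>t. fst (\<psi> t)) has_real_derivative fst v) (at t)"
  using has_derivative_fst[OF assms[unfolded has_vector_derivative_def]]
  by (simp add: has_real_derivative_iff_has_vector_derivative has_vector_derivative_def)

lemma hvd_snd:
  assumes "(\<psi> has_vector_derivative v) (at t)"
  shows "((\<lambda>t. snd (\<psi> t)) has_real_derivative snd v) (at t)"
  using has_derivative_snd[OF assms[unfolded has_vector_derivative_def]]
  by (simp add: has_real_derivative_iff_has_vector_derivative has_vector_derivative_def)

lemma hvd_pair:
  assumes "((\<lambda>t. fst (\<psi> t)) has_real_derivative a) (at t)"
    "((\<lambda>t. snd (\<psi> t)) has_real_derivative b) (at t)"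
  shows "(\<psi> has_vector_derivative (a, b)) (at t)"
proof -
  have "((\<lambda>t. (fst (\<psi> t), snd (\<psi> t))) has_vector_derivative (a, b)) (at t)"
    using assms by (intro has_vector_derivative_Pair) (simp_all add: has_real_derivative_iff_has_vector_derivative)
  then show ?thesis by simp
qed

lemma conj_solution:
  fixes f g :: "real \<times> real \<Rightarrow> real \<times> real"
  assumes A: "\<And>z. A z = (\<alpha> * fst z + \<beta>, \<gamma> * snd z)"
    and fg: "\<And>z. g (A z) = (c * \<alpha> * fst (f z), c * \<gamma> * snd (f z))"
    and sol: "is_solution f \<phi>"
  shows "is_solution g (\<lambda>s. A (\<phi> (c * s)))"
  unfolding is_solution_def
proof
  fix s
  have d0: "((\<lambda>s. c * s) has_vector_derivative c) (at s)"
    by (auto intro!: derivative_eq_intros simp: has_real_derivative_iff_has_vector_derivative[symmetric])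
  have "((\<phi> \<circ> (\<lambda>s. c * s)) has_vector_derivative (c *\<^sub>R f (\<phi> (c * s)))) (at s)"
    by (rule vector_diff_chain_at[OF d0]) (use sol in \<open>simp add: is_solution_def\<close>)
  then have d1: "((\<lambda>s. \<phi> (c * s)) has_vector_derivative (c *\<^sub>R f (\<phi> (c * s)))) (at s)"
    by (simp add: o_def)
  have e1: "((\<lambda>s. \<alpha> * fst (\<phi> (c * s)) + \<beta>) has_real_derivative (c * \<alpha> * fst (f (\<phi> (c * s))))) (at s)"
    using hvd_fst[OF d1] by (auto intro!: derivative_eq_intros)
  have e2: "((\<lambda>s. \<gamma> * snd (\<phi> (c * s))) has_real_derivative (c * \<gamma> * snd (f (\<phi> (c * s))))) (at s)"
    using hvd_snd[OF d1] by (auto intro!: derivative_eq_intros)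
  show "((\<lambda>s. A (\<phi> (c * s))) has_vector_derivative g (A (\<phi> (c * s)))) (at s)"
    unfolding fg by (rule hvd_pair) (use e1 e2 in \<open>simp_all add: A\<close>)
qed

lemma conj_periodic:
  fixes f g :: "real \<times> real \<Rightarrow> real \<times> real"
  assumes A: "\<And>z. A z = (\<alpha> * fst z + \<beta>, \<gamma> * snd z)"
    and fg: "\<And>z. g (A z) = (c * \<alpha> * fst (f z), c * \<gamma> * snd (f z))"
    and c: "c > 0" and inj: "inj A"
    and ps: "periodic_solution f \<phi>"
  shows "periodic_solution g (\<lambda>s. A (\<phi> (c * s)))"
    and "range (\<lambda>s. A (\<phi> (c * s))) = A ` range \<phi>"
    and "\<And>P. is_period (\<lambda>s. A (\<phi> (c * s))) P \<longleftrightarrow> is_period \<phi> (c * P)"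
proof -
  show per: "is_period (\<lambda>s. A (\<phi> (c * s))) P \<longleftrightarrow> is_period \<phi> (c * P)" for P
  proof
    assume H: "is_period (\<lambda>s. A (\<phi> (c * s))) P"
    show "is_period \<phi> (c * P)"
      unfolding is_period_def
    proof (intro conjI allI)
      show "c * P > 0" using H c by (simp add: is_period_def)
      fix t
      have "A (\<phi> (c * (t / c + P))) = A (\<phi> (c * (t / c)))"
        using H by (simp add: is_period_def)
      then have "\<phi> (c * (t / c + P)) = \<phi> (c * (t / c))" by (rule injD[OF inj])
      then show "\<phi> (t + c * P) = \<phi> t" using c by (simp add: distrib_left)
    qed
  next
    assume H: "is_period \<phi> (c * P)"
    show "is_period (\<lambda>s. A (\<phi> (c * s))) P"
      unfolding is_period_def
    proof (intro conjI allI)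
      show "P > 0" using H c by (simp add: is_period_def zero_less_mult_iff)
      fix s
      show "A (\<phi> (c * (s + P))) = A (\<phi> (c * s))"
        using H by (simp add: is_period_def distrib_left)
    qed
  qed
  show rng: "range (\<lambda>s. A (\<phi> (c * s))) = A ` range \<phi>"
  proof
    show "range (\<lambda>s. A (\<phi> (c * s))) \<subseteq> A ` range \<phi>" by auto
    show "A ` range \<phi> \<subseteq> range (\<lambda>s. A (\<phi> (c * s)))"
    proof
      fix q assume "q \<in> A ` range \<phi>"
      then obtain t where "q = A (\<phi> t)" by auto
      then have "q = A (\<phi> (c * (t / c)))" using c by simp
      then show "q \<in> range (\<lambda>s. A (\<phi> (c * s)))" by blast
    qed
  qed
  show "periodic_solution g (\<lambda>s. A (\<phi> (c * s)))"
    unfolding periodic_solution_def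
  proof (intro conjI)
    show "is_solution g (\<lambda>s. A (\<phi> (c * s)))"
      by (rule conj_solution[where A=A and g=g and f=f and c=c, OF A fg]) (use ps in \<open>simp add: periodic_solution_def\<close>)
    obtain T where T: "is_period \<phi> T" using ps by (auto simp: periodic_solution_def)
    then have "is_period \<phi> (c * (T / c))" using c by simp
    then show "\<exists>T. is_period (\<lambda>s. A (\<phi> (c * s))) T" using per by blast
    show "\<not> (\<exists>C. \<forall>s. A (\<phi> (c * s)) = C)"
    proof
      assume "\<exists>C. \<forall>s. A (\<phi> (c * s)) = C"
      then obtain C where C: "\<And>s. A (\<phi> (c * s)) = C" by blast
      have "\<phi> t = \<phi> 0" for t
      proof -
        have "A (\<phi> (c * (t / c))) = A (\<phi> (c * 0))" by (simp only: C)
        then have "\<phi> (c * (t / c)) = \<phi> (c * 0)" by (rule injD[OF inj])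
        then show ?thesis using c by simp
      qed
      then have "\<exists>C. \<forall>t. \<phi> t = C" by blast
      then show False using ps unfolding periodic_solution_def by blast
    qed
  qed
qed

lemma mult_bound:
  fixes a K p q :: real
  assumes "\<bar>a\<bar> \<le> K"
  shows "\<bar>a * p * q\<bar> \<le> K * (p\<^sup>2 + q\<^sup>2)"
proof -
  have "2 * \<bar>p\<bar> * \<bar>q\<bar> \<le> p\<^sup>2 + q\<^sup>2"
    using sum_squares_bound[of "\<bar>p\<bar>" "\<bar>q\<bar>"] by (simp add: power2_eq_square)
  moreover have "0 \<le> \<bar>p\<bar> * \<bar>q\<bar>" by simp
  ultimately have pq: "\<bar>p\<bar> * \<bar>q\<bar> \<le> p\<^sup>2 + q\<^sup>2" by linarith
  have "\<bar>a * p * q\<bar> = \<bar>a\<bar> * (\<bar>p\<bar> * \<bar>q\<bar>)" by (simp add: abs_mult)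
  also have "\<dots> \<le> K * (p\<^sup>2 + q\<^sup>2)"
    using assms pq by (intro mult_mono) auto
  finally show ?thesis .
qed

lemma abs3:
  fixes P Q V a b c :: real
  shows "\<bar>P\<bar> \<le> a \<Longrightarrow> \<bar>Q\<bar> \<le> b \<Longrightarrow> \<bar>V\<bar> \<le> c \<Longrightarrow> \<bar>2 * (P + Q + V)\<bar> \<le> 2 * (a + b + c)"
  by (simp add: abs_le_iff)

lemma abs3_rearr:
  fixes R D F S :: real
  shows "2 * (R + 2 * \<bar>D\<bar> * R + R + 2 * \<bar>F\<bar> * R) * S
       = 2 * ((R + 2 * \<bar>D\<bar> * R) * S + R * S + (2 * \<bar>F\<bar> * R) * S)"
  by (simp add: algebra_simps)

lemma key_ineq:
  fixes x x' y y' R D F :: real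
  assumes "\<bar>x\<bar> \<le> R" "\<bar>x'\<bar> \<le> R" "\<bar>y\<bar> \<le> R" "\<bar>y'\<bar> \<le> R"
  shows "\<bar>2 * ((x - x') * ((- y + x * y) - (- y' + x' * y'))
           + (y - y') * ((x + D * x\<^sup>2 + F * y\<^sup>2) - (x' + D * x'\<^sup>2 + F * y'\<^sup>2)))\<bar>
         \<le> 2 * (R + 2 * \<bar>D\<bar> * R + R + 2 * \<bar>F\<bar> * R) * ((x - x')\<^sup>2 + (y - y')\<^sup>2)"
proof -
  have R0: "0 \<le> R" using assms(1) by (meson abs_ge_zero order_trans)
  define d1 where "d1 = x - x'"
  define d2 where "d2 = y - y'"
  have eq: "d1 * ((- y + x * y) - (- y' + x' * y'))
           + d2 * ((x + D * x\<^sup>2 + F * y\<^sup>2) - (x' + D * x'\<^sup>2 + F * y'\<^sup>2))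
         = (x + D * (x + x')) * d1 * d2 + y' * d1 * d1 + F * (y + y') * d2 * d2"
    unfolding d1_def d2_def by (simp add: power2_eq_square algebra_simps)
  have b1: "\<bar>x + D * (x + x')\<bar> \<le> R + 2 * \<bar>D\<bar> * R"
  proof -
    have "\<bar>D * (x + x')\<bar> = \<bar>D\<bar> * \<bar>x + x'\<bar>" by (simp add: abs_mult)
    also have "\<dots> \<le> \<bar>D\<bar> * (2 * R)" using assms by (intro mult_left_mono) auto
    finally show ?thesis using assms by simp
  qed
  have b3: "\<bar>F * (y + y')\<bar> \<le> 2 * \<bar>F\<bar> * R"
  proof -
    have "\<bar>F * (y + y')\<bar> = \<bar>F\<bar> * \<bar>y + y'\<bar>" by (simp add: abs_mult)
    also have "\<dots> \<le> \<bar>F\<bar> * (2 * R)" using assms by (intro mult_left_mono) auto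
    finally show ?thesis by simp
  qed
  have t1: "\<bar>(x + D * (x + x')) * d1 * d2\<bar> \<le> (R + 2 * \<bar>D\<bar> * R) * (d1\<^sup>2 + d2\<^sup>2)"
    by (rule mult_bound[OF b1])
  have t2: "\<bar>y' * d1 * d1\<bar> \<le> R * (d1\<^sup>2 + d2\<^sup>2)"
  proof -
    have "\<bar>y' * d1 * d1\<bar> = \<bar>y'\<bar> * d1\<^sup>2" by (simp add: abs_mult power2_eq_square)
    also have "\<dots> \<le> R * (d1\<^sup>2 + d2\<^sup>2)" using assms by (intro mult_mono) auto
    finally show ?thesis .
  qed
  have t3: "\<bar>F * (y + y') * d2 * d2\<bar> \<le> (2 * \<bar>F\<bar> * R) * (d1\<^sup>2 + d2\<^sup>2)"
  proof -
    have "\<bar>F * (y + y') * d2 * d2\<bar> = \<bar>F * (y + y')\<bar> * d2\<^sup>2" by (simp add: abs_mult power2_eq_square)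
    also have "\<dots> \<le> (2 * \<bar>F\<bar> * R) * (d1\<^sup>2 + d2\<^sup>2)" using b3 R0 by (intro mult_mono) auto
    finally show ?thesis .
  qed
  show ?thesis unfolding d1_def[symmetric] d2_def[symmetric] eq abs3_rearr
    by (rule abs3[OF t1 t2 t3])
qed

lemma sol_bounded:
  assumes "is_solution f \<psi>"
  shows "\<exists>R. \<forall>s\<in>{-M..M}. norm (\<psi> s) \<le> R"
proof -
  have "continuous_on {-M..M} \<psi>"
    using assms unfolding is_solution_def
    by (intro continuous_at_imp_continuous_on ballI has_vector_derivative_continuous) auto
  then have "bounded (\<psi> ` {-M..M})"
    by (intro compact_imp_bounded compact_continuous_image) auto
  then show ?thesis by (auto simp: bounded_iff)
qed

lemma abs_fst_le: "\<bar>fst (z :: real \<times> real)\<bar> \<le> norm z"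
  using norm_fst_le[of "fst z" "snd z"] by simp

lemma abs_snd_le: "\<bar>snd (z :: real \<times> real)\<bar> \<le> norm z"
  using norm_snd_le[of "snd z" "fst z"] by simp

lemma sol_unique:
  assumes s1: "is_solution (sysDF D F) \<psi>" and s2: "is_solution (sysDF D F) \<phi>"
    and e: "\<psi> 0 = \<phi> 0"
  shows "\<psi> t = \<phi> t"
proof -
  define M where "M = \<bar>t\<bar>"
  obtain R1 where R1: "\<forall>s\<in>{-M..M}. norm (\<psi> s) \<le> R1" using sol_bounded[OF s1] by blast
  obtain R2 where R2: "\<forall>s\<in>{-M..M}. norm (\<phi> s) \<le> R2" using sol_bounded[OF s2] by blast
  define R where "R = max R1 R2"
  define L where "L = R + 2 * \<bar>D\<bar> * R + R + 2 * \<bar>F\<bar> * R"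
  define w where "w s = (fst (\<psi> s) - fst (\<phi> s))\<^sup>2 + (snd (\<psi> s) - snd (\<phi> s))\<^sup>2" for s
  define w' where "w' s = 2 * ((fst (\<psi> s) - fst (\<phi> s)) *
        ((- snd (\<psi> s) + fst (\<psi> s) * snd (\<psi> s)) - (- snd (\<phi> s) + fst (\<phi> s) * snd (\<phi> s)))
      + (snd (\<psi> s) - snd (\<phi> s)) *
        ((fst (\<psi> s) + D * (fst (\<psi> s))\<^sup>2 + F * (snd (\<psi> s))\<^sup>2)
         - (fst (\<phi> s) + D * (fst (\<phi> s))\<^sup>2 + F * (snd (\<phi> s))\<^sup>2)))" for s
  have dw: "(w has_real_derivative w' s) (at s)" for s
  proof -
    have d1: "(\<psi> has_vector_derivative sysDF D F (\<psi> s)) (at s)" using s1 by (simp add: is_solution_def)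
    have d2: "(\<phi> has_vector_derivative sysDF D F (\<phi> s)) (at s)" using s2 by (simp add: is_solution_def)
    note a1 = hvd_fst[OF d1] and b1 = hvd_snd[OF d1] and a2 = hvd_fst[OF d2] and b2 = hvd_snd[OF d2]
    show ?thesis unfolding w_def[abs_def] w'_def
      using a1 b1 a2 b2
      by (auto intro!: derivative_eq_intros simp: sysDF_def case_prod_beta algebra_simps)
  qed
  have bw: "\<bar>w' s\<bar> \<le> 2 * L * w s" if "s \<in> {-M..M}" for s
  proof -
    have "\<bar>fst (\<psi> s)\<bar> \<le> R" "\<bar>fst (\<phi> s)\<bar> \<le> R" "\<bar>snd (\<psi> s)\<bar> \<le> R" "\<bar>snd (\<phi> s)\<bar> \<le> R"
      using R1 R2 that abs_fst_le abs_snd_le unfolding R_def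
      by (meson max.coboundedI1 max.coboundedI2 order_trans)+
    from key_ineq[OF this, of D F] show ?thesis
      unfolding w'_def w_def L_def by (simp add: mult.assoc)
  qed
  have w0: "w 0 = 0" using e by (simp add: w_def)
  have wnn: "w s \<ge> 0" for s by (simp add: w_def)
  have wt: "w t = 0"
  proof (cases "t \<ge> 0")
    case True
    define g where "g s = exp (- (2 * L) * s) * w s" for s
    have "g 0 \<ge> g t"
    proof (rule DERIV_nonpos_imp_nonincreasing[OF True])
      fix x assume x: "0 \<le> x" "x \<le> t"
      have "(g has_real_derivative exp (- (2 * L) * x) * (- (2 * L)) * w x + exp (- (2 * L) * x) * w' x) (at x)"
        unfolding g_def[abs_def] by (auto intro!: derivative_eq_intros dw)
      moreover have "exp (- (2 * L) * x) * (- (2 * L)) * w x + exp (- (2 * L) * x) * w' x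
          = exp (- (2 * L) * x) * (w' x - 2 * L * w x)" by (simp add: algebra_simps)
      moreover have "w' x - 2 * L * w x \<le> 0" using bw[of x] x M_def by auto
      ultimately show "\<exists>y. (g has_real_derivative y) (at x) \<and> y \<le> 0"
        by (metis mult_nonneg_nonpos exp_ge_zero)
    qed
    then have "exp (- (2 * L) * t) * w t \<le> 0" using w0 by (simp add: g_def)
    then show ?thesis using wnn[of t] by (simp add: mult_le_0_iff)
  next
    case False
    then have tl: "t \<le> 0" by simp
    define g where "g s = - (exp ((2 * L) * s) * w s)" for s
    have "g t \<ge> g 0"
    proof (rule DERIV_nonpos_imp_nonincreasing[OF tl])
      fix x assume x: "t \<le> x" "x \<le> 0"
      have "(g has_real_derivative - (exp ((2 * L) * x) * (2 * L) * w x + exp ((2 * L) * x) * w' x)) (at x)"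
        unfolding g_def[abs_def] by (auto intro!: derivative_eq_intros dw)
      moreover have "- (exp ((2 * L) * x) * (2 * L) * w x + exp ((2 * L) * x) * w' x)
          = - (exp ((2 * L) * x) * (2 * L * w x + w' x))" by (simp add: algebra_simps)
      moreover have "2 * L * w x + w' x \<ge> 0" using bw[of x] x M_def by auto
      ultimately show "\<exists>y. (g has_real_derivative y) (at x) \<and> y \<le> 0"
        by (metis neg_le_0_iff_le mult_nonneg_nonneg exp_ge_zero)
    qed
    then have "exp ((2 * L) * t) * w t \<le> 0" using w0 by (simp add: g_def)
    then show ?thesis using wnn[of t] by (simp add: mult_le_0_iff)
  qed
  then have "fst (\<psi> t) = fst (\<phi> t)" "snd (\<psi> t) = snd (\<phi> t)"
    unfolding w_def by (simp_all add: add_nonneg_eq_0_iff)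
  then show ?thesis by (simp add: prod_eq_iff)
qed

lemma shift_solution:
  assumes "is_solution f \<phi>"
  shows "is_solution f (\<lambda>t. \<phi> (t + t0))"
  unfolding is_solution_def
proof
  fix t
  have d0: "((\<lambda>t. t + t0) has_vector_derivative 1) (at t)"
    by (auto intro!: derivative_eq_intros simp: has_real_derivative_iff_has_vector_derivative[symmetric])
  have "((\<phi> \<circ> (\<lambda>t. t + t0)) has_vector_derivative (1 *\<^sub>R f (\<phi> (t + t0)))) (at t)"
    by (rule vector_diff_chain_at[OF d0]) (use assms in \<open>simp add: is_solution_def\<close>)
  then show "((\<lambda>t. \<phi> (t + t0)) has_vector_derivative f (\<phi> (t + t0))) (at t)"
    by (simp add: o_def)
qed

lemma minp_unique:
  assumes p1: "periodic_solution (sysDF D F) \<phi>1" and p2: "periodic_solution (sysDF D F) \<phi>2"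
    and r: "range \<phi>1 = range \<phi>2"
  shows "min_period \<phi>1 = min_period \<phi>2"
proof -
  have "\<phi>2 0 \<in> range \<phi>1" using r by auto
  then obtain t0 where t0: "\<phi>2 0 = \<phi>1 t0" by auto
  have s1: "is_solution (sysDF D F) (\<lambda>t. \<phi>1 (t + t0))"
    using p1 by (intro shift_solution) (simp add: periodic_solution_def)
  have s2: "is_solution (sysDF D F) \<phi>2" using p2 by (simp add: periodic_solution_def)
  have eq: "\<phi>2 t = \<phi>1 (t + t0)" for t
    using sol_unique[OF s1 s2] t0 by simp
  have "is_period \<phi>2 P \<longleftrightarrow> is_period \<phi>1 P" for P
  proof
    assume H: "is_period \<phi>2 P"
    show "is_period \<phi>1 P" unfolding is_period_def
    proof (intro conjI allI)
      show "P > 0" using H by (simp add: is_period_def)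
      fix t
      have "\<phi>2 ((t - t0) + P) = \<phi>2 (t - t0)" using H by (simp add: is_period_def)
      then show "\<phi>1 (t + P) = \<phi>1 t" unfolding eq by (simp add: algebra_simps)
    qed
  next
    assume H: "is_period \<phi>1 P"
    show "is_period \<phi>2 P" unfolding is_period_def
    proof (intro conjI allI)
      show "P > 0" using H by (simp add: is_period_def)
      fix t
      have "\<phi>1 ((t + t0) + P) = \<phi>1 (t + t0)" using H by (simp add: is_period_def)
      then show "\<phi>2 (t + P) = \<phi>2 t" unfolding eq by (simp add: algebra_simps)
    qed
  qed
  then have "is_period \<phi>1 = is_period \<phi>2" by (simp add: fun_eq_iff)
  then show ?thesis unfolding min_period_def by simp
qed

lemma orbit_period_eq:
  assumes p: "periodic_solution (sysDF D F) \<phi>"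
  shows "orbit_period (sysDF D F) (range \<phi>) = min_period \<phi>"
  unfolding orbit_period_def
proof (rule the_equality)
  show "\<exists>\<psi>. periodic_solution (sysDF D F) \<psi> \<and> range \<psi> = range \<phi> \<and> min_period \<psi> = min_period \<phi>"
    using p by blast
next
  fix T assume "\<exists>\<psi>. periodic_solution (sysDF D F) \<psi> \<and> range \<psi> = range \<phi> \<and> min_period \<psi> = T"
  then obtain \<psi> where "periodic_solution (sysDF D F) \<psi>" "range \<psi> = range \<phi>" "min_period \<psi> = T"
    by blast
  then show "T = min_period \<phi>" using minp_unique[OF _ p] by metis
qed

lemma Inf_scale:
  fixes S :: "real set" and c :: real
  assumes c: "c > 0" and ne: "S \<noteq> {}" and lb: "\<forall>x\<in>S. 0 \<le> x"
  shows "Inf ((\<lambda>x. c * x) ` S) = c * Inf S"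
proof (rule cInf_eq_non_empty)
  have bdd: "bdd_below S" using lb by (auto simp: bdd_below_def)
  show "(\<lambda>x. c * x) ` S \<noteq> {}" using ne by simp
  show "\<And>x. x \<in> (\<lambda>x. c * x) ` S \<Longrightarrow> c * Inf S \<le> x"
    using cInf_lower[OF _ bdd] c by auto
  fix y assume H: "\<And>x. x \<in> (\<lambda>x. c * x) ` S \<Longrightarrow> y \<le> x"
  have "y / c \<le> Inf S"
  proof (rule cInf_greatest[OF ne])
    fix x assume "x \<in> S"
    then have "y \<le> c * x" using H by auto
    then show "y / c \<le> x" using c by (simp add: divide_le_eq mult.commute)
  qed
  then show "y \<le> c * Inf S" using c by (simp add: divide_le_eq mult.commute)
qed

lemma min_period_scale:
  assumes c: "c > 0" and per: "\<And>P. is_period \<psi> P \<longleftrightarrow> is_period \<phi> (c * P)"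
    and ex: "\<exists>T. is_period \<phi> T"
  shows "min_period \<phi> = c * min_period \<psi>"
proof -
  have "{T. is_period \<phi> T} = (\<lambda>x. c * x) ` {P. is_period \<psi> P}"
  proof
    show "{T. is_period \<phi> T} \<subseteq> (\<lambda>x. c * x) ` {P. is_period \<psi> P}"
    proof
      fix T assume "T \<in> {T. is_period \<phi> T}"
      then have "is_period \<psi> (T / c)" using per c by simp
      moreover have "T = c * (T / c)" using c by simp
      ultimately show "T \<in> (\<lambda>x. c * x) ` {P. is_period \<psi> P}" by blast
    qed
    show "(\<lambda>x. c * x) ` {P. is_period \<psi> P} \<subseteq> {T. is_period \<phi> T}"
      using per by auto
  qed
  moreover have "{P. is_period \<psi> P} \<noteq> {}"
  proof -
    obtain T where "is_period \<phi> T" using ex by blast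
    then have "is_period \<psi> (T / c)" using per c by simp
    then show ?thesis by blast
  qed
  moreover have "\<forall>x\<in>{P. is_period \<psi> P}. 0 \<le> x" by (auto simp: is_period_def)
  ultimately show ?thesis unfolding min_period_def using Inf_scale[OF c] by simp
qed

lemma PA_image_sub:
  assumes hc: "continuous_on UNIV h" and hic: "continuous_on UNIV hi"
    and inv1: "\<And>z. hi (h z) = z" and inv2: "\<And>z. h (hi z) = z"
    and po: "\<And>\<Gamma>. periodic_orbit f \<Gamma> \<Longrightarrow> periodic_orbit g (h ` \<Gamma>)"
  shows "h ` period_annulus f p \<subseteq> period_annulus g (h p)"
proof
  fix q assume "q \<in> h ` period_annulus f p"
  then obtain x U where q: "q = h x" and xU: "x \<in> U" and xp: "x \<noteq> p"
    and U: "open U" "connected U" "p \<in> U"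
    and Up: "\<forall>q \<in> U - {p}. \<exists>\<Gamma>. periodic_orbit f \<Gamma> \<and> q \<in> \<Gamma> \<and> \<Gamma> \<subseteq> U - {p}"
    unfolding period_annulus_def by blast
  have injh: "inj h" by (metis inv1 injI)
  have hU: "h ` U = hi -` U"
  proof (rule set_eqI)
    fix z
    show "z \<in> h ` U \<longleftrightarrow> z \<in> hi -` U"
    proof
      assume "z \<in> h ` U"
      then obtain u where "u \<in> U" "z = h u" by blast
      then show "z \<in> hi -` U" using inv1 by simp
    next
      assume "z \<in> hi -` U"
      then have "hi z \<in> U" by simp
      then have "h (hi z) \<in> h ` U" by (rule imageI)
      then show "z \<in> h ` U" using inv2 by simp
    qed
  qed
  have "open (h ` U)" unfolding hU
    by (rule continuous_open_vimage[OF U(1)]) (use hic in \<open>auto simp: continuous_on_eq_continuous_at simp del: split_paired_All\<close>)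
  moreover have "connected (h ` U)"
    by (rule connected_continuous_image[OF continuous_on_subset[OF hc] U(2)]) simp
  moreover have "h p \<in> h ` U" using U(3) by simp
  moreover have "\<forall>q \<in> h ` U - {h p}. \<exists>\<Gamma>. periodic_orbit g \<Gamma> \<and> q \<in> \<Gamma> \<and> \<Gamma> \<subseteq> h ` U - {h p}"
  proof
    fix q assume "q \<in> h ` U - {h p}"
    then obtain y where y: "q = h y" "y \<in> U - {p}" by auto
    then obtain \<Gamma> where G: "periodic_orbit f \<Gamma>" "y \<in> \<Gamma>" "\<Gamma> \<subseteq> U - {p}" using Up by blast
    have "h ` \<Gamma> \<subseteq> h ` U - {h p}" using G(3) injh by (auto simp: inj_eq)
    then show "\<exists>\<Gamma>. periodic_orbit g \<Gamma> \<and> q \<in> \<Gamma> \<and> \<Gamma> \<subseteq> h ` U - {h p}"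
      using po[OF G(1)] G(2) y(1) by blast
  qed
  moreover have "h x \<in> h ` U" "h x \<noteq> h p" using xU xp injh by (auto simp: inj_eq)
  ultimately show "q \<in> period_annulus g (h p)"
    unfolding period_annulus_def q by blast
qed

lemma AO_image:
  assumes hc: "continuous_on UNIV h" and hic: "continuous_on UNIV hi"
    and inv1: "\<And>z. hi (h z) = z" and inv2: "\<And>z. h (hi z) = z"
    and po: "\<And>\<Gamma>. periodic_orbit f \<Gamma> \<Longrightarrow> periodic_orbit g (h ` \<Gamma>)"
    and po2: "\<And>\<Gamma>. periodic_orbit g \<Gamma> \<Longrightarrow> periodic_orbit f (hi ` \<Gamma>)"
  shows "(\<lambda>\<Gamma>. h ` \<Gamma>) ` annulus_orbits f p = annulus_orbits g (h p)"
proof -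
  have PA: "period_annulus g (h p) = h ` period_annulus f p"
  proof
    show "h ` period_annulus f p \<subseteq> period_annulus g (h p)"
      by (rule PA_image_sub[OF hc hic inv1 inv2 po])
    have sub: "hi ` period_annulus g (h p) \<subseteq> period_annulus f (hi (h p))"
      by (rule PA_image_sub[OF hic hc inv2 inv1 po2])
    show "period_annulus g (h p) \<subseteq> h ` period_annulus f p"
    proof
      fix q assume "q \<in> period_annulus g (h p)"
      then have "hi q \<in> period_annulus f p" using sub inv1 by auto
      then show "q \<in> h ` period_annulus f p" using inv2 by (metis image_eqI)
    qed
  qed
  show ?thesis
  proof
    show "(\<lambda>\<Gamma>. h ` \<Gamma>) ` annulus_orbits f p \<subseteq> annulus_orbits g (h p)"
      unfolding annulus_orbits_def PA using po by auto
    show "annulus_orbits g (h p) \<subseteq> (\<lambda>\<Gamma>. h ` \<Gamma>) ` annulus_orbits f p"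
    proof
      fix \<Delta> assume "\<Delta> \<in> annulus_orbits g (h p)"
      then have D: "periodic_orbit g \<Delta>" "\<Delta> \<subseteq> h ` period_annulus f p"
        unfolding annulus_orbits_def PA by auto
      have "hi ` \<Delta> \<subseteq> period_annulus f p" using D(2) inv1 by auto
      then have "hi ` \<Delta> \<in> annulus_orbits f p" using po2[OF D(1)] by (simp add: annulus_orbits_def)
      moreover have "\<Delta> = h ` (hi ` \<Delta>)" using inv2 by (simp add: image_image)
      ultimately show "\<Delta> \<in> (\<lambda>\<Gamma>. h ` \<Gamma>) ` annulus_orbits f p" by blast
    qed
  qed
qed

theorem corollary3p3:
  fixes D F :: real
  assumes "-1 < D" and "D < 0"
  shows "(\<lambda>\<Gamma>. (\<lambda>(x, y). ((D * x + 1) / (D + 1), sqrt (- D / (D + 1)) * y)) ` \<Gamma>)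
            ` annulus_orbits (sysDF D F) (-1 / D, 0)
         = annulus_orbits (sysDF (-D - 1) F) (0, 0)
       \<and> (\<forall>\<Gamma> \<in> annulus_orbits (sysDF D F) (-1 / D, 0).
            orbit_period (sysDF D F) \<Gamma>
            = sqrt (- D / (D + 1)) * orbit_period (sysDF (-D - 1) F)
                ((\<lambda>(x, y). ((D * x + 1) / (D + 1), sqrt (- D / (D + 1)) * y)) ` \<Gamma>))"
proof -
  define k where "k = sqrt (- D / (D + 1))"
  define h :: "real \<times> real \<Rightarrow> real \<times> real" where "h = (\<lambda>(x, y). ((D * x + 1) / (D + 1), k * y))"
  define hi :: "real \<times> real \<Rightarrow> real \<times> real" where "hi = (\<lambda>z. ((D + 1) / D * fst z + (- 1 / D), (1 / k) * snd z))"
  define f where "f = sysDF D F"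
  define g where "g = sysDF (-D - 1) F"
  have D1: "D + 1 > 0" and Dn: "D \<noteq> 0" using assms by auto
  have pos: "- D / (D + 1) > 0" using D1 assms(2) by (intro divide_pos_pos) auto
  have k0: "k > 0" unfolding k_def using pos by simp
  have kk: "k * k = - D / (D + 1)" unfolding k_def using pos
    by (metis less_eq_real_def real_sqrt_mult_self abs_of_nonneg)
  have hA: "\<And>z. h z = (D / (D + 1) * fst z + 1 / (D + 1), k * snd z)"
    by (simp add: h_def case_prod_beta add_divide_distrib)
  have hiA: "\<And>z. hi z = ((D + 1) / D * fst z + (- 1 / D), (1 / k) * snd z)"
    by (simp add: hi_def)
  have fg: "g (h z) = (k * (D / (D + 1)) * fst (f z), k * k * snd (f z))" for z
  proof -
    obtain x y where z: "z = (x, y)" by (cases z)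
    have c1: "- (k * y) + (D * x + 1) / (D + 1) * (k * y) = k * (D / (D + 1)) * (- y + x * y)"
      using D1 by (simp add: field_simps)
    have e: "k * k * (x + D * x\<^sup>2 + F * y\<^sup>2) = - D / (D + 1) * (x + D * x\<^sup>2) + F * (k * y)\<^sup>2"
    proof -
      have e0: "k * k * (x + D * x\<^sup>2 + F * y\<^sup>2) = (k * k) * (x + D * x\<^sup>2) + F * (k * y)\<^sup>2"
        by (simp add: power2_eq_square algebra_simps)
      show ?thesis by (subst e0) (simp only: kk)
    qed
    have c2: "(D * x + 1) / (D + 1) + (- D - 1) * ((D * x + 1) / (D + 1))\<^sup>2 + F * (k * y)\<^sup>2
        = k * k * (x + D * x\<^sup>2 + F * y\<^sup>2)"
    proof -
      have ne: "D + 1 \<noteq> 0" using D1 by simp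
      have a: "(- D - 1) * ((D * x + 1) / (D + 1))\<^sup>2 = - ((D * x + 1)\<^sup>2 / (D + 1))"
        using ne by (simp add: power_divide power2_eq_square divide_simps) (simp add: algebra_simps)
      have b: "(D * x + 1) / (D + 1) + (- D - 1) * ((D * x + 1) / (D + 1))\<^sup>2 = - D / (D + 1) * (x + D * x\<^sup>2)"
        unfolding a using ne by (simp add: divide_simps) (simp add: power2_eq_square algebra_simps)
      show ?thesis unfolding e b[symmetric] by simp
    qed
    show ?thesis unfolding z g_def f_def h_def sysDF_def using c1 c2 by simp
  qed
  have inv1: "hi (h z) = z" for z
  proof -
    have a: "(D + 1) / D * ((D * fst z + 1) / (D + 1)) = (D * fst z + 1) / D"
      using D1 by simp
    have b: "(D + 1) / D * ((D * fst z + 1) / (D + 1)) + (- 1 / D) = fst z"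
      unfolding a using Dn by (simp add: field_simps)
    show ?thesis using b k0 D1 by (simp add: hi_def h_def prod_eq_iff case_prod_beta)
  qed
  have inv2: "h (hi z) = z" for z
  proof -
    have a: "D * ((D + 1) / D * fst z + (- 1 / D)) + 1 = (D + 1) * fst z"
      using Dn by (simp add: field_simps)
    have b: "(D * ((D + 1) / D * fst z + (- 1 / D)) + 1) / (D + 1) = fst z"
      unfolding a using D1 by simp
    show ?thesis using b k0 by (simp add: hi_def h_def prod_eq_iff)
  qed
  have gf: "f (hi z) = (1 / k * ((D + 1) / D) * fst (g z), 1 / k * (1 / k) * snd (g z))" for z
  proof -
    have "g z = (k * (D / (D + 1)) * fst (f (hi z)), k * k * snd (f (hi z)))"
      using fg[of "hi z"] by (simp add: inv2)
    then have a: "fst (g z) = k * (D / (D + 1)) * fst (f (hi z))" and b: "snd (g z) = k * k * snd (f (hi z))"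
      by simp_all
    have nz0: "D * k * (D + 1) \<noteq> 0" using Dn D1 k0 by simp
    have "D * k + D * (D * k) = D * k * (D + 1)" by (simp add: algebra_simps)
    then have nz: "D * k + D * (D * k) \<noteq> 0" using nz0 by simp
    have m1: "1 / k * ((D + 1) / D) * (k * (D / (D + 1))) = 1" using Dn D1 k0 nz by (simp add: field_simps)
    have m2: "1 / k * (1 / k) * (k * k) = 1" using k0 by (simp add: field_simps)
    have e1: "1 / k * ((D + 1) / D) * (k * (D / (D + 1)) * v) = (1 / k * ((D + 1) / D) * (k * (D / (D + 1)))) * v" for v
      by (simp only: mult.assoc)
    have e2: "1 / k * (1 / k) * (k * k * v) = (1 / k * (1 / k) * (k * k)) * v" for v
      by (simp only: mult.assoc)
    show ?thesis unfolding a b e1 e2 m1 m2 by (simp add: prod_eq_iff)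
  qed
  have injh: "inj h" by (metis inv1 injI)
  have injhi: "inj hi" by (metis inv2 injI)
  have hc: "continuous_on UNIV h"
  proof -
    have "h = (\<lambda>z. (D / (D + 1) * fst z + 1 / (D + 1), k * snd z))" using hA by (simp add: fun_eq_iff)
    moreover have "continuous_on UNIV (\<lambda>z::real \<times> real. (D / (D + 1) * fst z + 1 / (D + 1), k * snd z))"
      by (intro continuous_intros)
    ultimately show ?thesis by simp
  qed
  have hic: "continuous_on UNIV hi" unfolding hi_def by (intro continuous_intros)
  note cp1 = conj_periodic[where A=h and \<alpha>="D / (D + 1)" and \<beta>="1 / (D + 1)" and \<gamma>=k and c=k
      and f=f and g=g, OF hA fg k0 injh]
  have k0': "1 / k > 0" using k0 by simp
  note cp2 = conj_periodic[where A=hi and \<alpha>="(D + 1) / D" and \<beta>="- 1 / D" and \<gamma>="1 / k" and c="1 / k"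
      and f=g and g=f, OF hiA gf k0' injhi]
  have po: "periodic_orbit g (h ` \<Gamma>)" if PO: "periodic_orbit f \<Gamma>" for \<Gamma>
  proof -
    obtain \<phi> where "periodic_solution f \<phi>" "\<Gamma> = range \<phi>" using PO by (auto simp: periodic_orbit_def)
    then show ?thesis using cp1(1,2) unfolding periodic_orbit_def by metis
  qed
  have po2: "periodic_orbit f (hi ` \<Gamma>)" if PO: "periodic_orbit g \<Gamma>" for \<Gamma>
  proof -
    obtain \<phi> where "periodic_solution g \<phi>" "\<Gamma> = range \<phi>" using PO by (auto simp: periodic_orbit_def)
    then show ?thesis using cp2(1,2) unfolding periodic_orbit_def by metis
  qed
  have hp: "h (-1 / D, 0) = (0, 0)" using Dn by (simp add: h_def)
  have part1: "(\<lambda>\<Gamma>. h ` \<Gamma>) ` annulus_orbits f (-1 / D, 0) = annulus_orbits g (0, 0)"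
    using AO_image[OF hc hic inv1 inv2 po po2, of "(-1 / D, 0)"] unfolding hp .
  have part2: "orbit_period f \<Gamma> = k * orbit_period g (h ` \<Gamma>)"
    if AO: "\<Gamma> \<in> annulus_orbits f (-1 / D, 0)" for \<Gamma>
  proof -
    obtain \<phi> where ph: "periodic_solution f \<phi>" "\<Gamma> = range \<phi>"
      using AO by (auto simp: annulus_orbits_def periodic_orbit_def)
    define \<psi> where "\<psi> = (\<lambda>s. h (\<phi> (k * s)))"
    have ps: "periodic_solution g \<psi>" unfolding \<psi>_def by (rule cp1(1)[OF ph(1)])
    have rg: "range \<psi> = h ` \<Gamma>" unfolding \<psi>_def ph(2) by (rule cp1(2)[OF ph(1)])
    have o1: "orbit_period f \<Gamma> = min_period \<phi>"
      unfolding ph(2) f_def by (rule orbit_period_eq) (use ph(1) f_def in simp)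
    have o2: "orbit_period g (h ` \<Gamma>) = min_period \<psi>"
      unfolding rg[symmetric] g_def by (rule orbit_period_eq) (use ps g_def in simp)
    have "min_period \<phi> = k * min_period \<psi>"
      by (rule min_period_scale[OF k0]) (use cp1(3)[OF ph(1)] ph(1) in \<open>auto simp: \<psi>_def periodic_solution_def\<close>)
    then show ?thesis using o1 o2 by simp
  qed
  show ?thesis
    using part1 part2 unfolding h_def f_def g_def k_def by blast
qed

end
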